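(* Let $X$ be an upper-bound unital commutative semiring. The following are equivalent: (1) $\mathcal{S}(X)$ is fully elementary; (2) $\mathcal{S}(X)$ is Frobenius; (3) $X=\{0\}$.
   Context: A semiring $(X,+,0,\cdot)$: $(X,+,0)$ commutative monoid, $(X,\cdot)$ semigroup, distributivity, $0$ absorbing. Intrinsic order: $a\le b$ iff $a+x=b$ for some $x$; upper-bound means this preorder is antisymmetric. $\mathcal{S}(X)=X\times X$ with $(a',a'')+(b',b'')=(a'+b',a''+b'')$, $(a',a'')\cdot(b',b'')=(a'b'+a''b'',a'b''+a''b')$; it is a unital commutative semiring with zero $(0,0)$ and unit $(1,0)$. A unital commutative semiring $Y$ is Frobenius if $(x+y)^n=x^n+y^n$ for all $x,y\in Y$, $n\ge1$. Polynomials over $Y$ in $n$ variables are functions $Y^n\to Y$ represented by formal expressions $\sum_k a_k\prod_j x_j^{d_{k,j}}$; symmetric if represented by an expression closed (with coefficients) under permuting variables. $e_j$ is the sum of all products of $j$ distinct variables. $Y$ is fully elementary if for every $n$ every symmetric polynomial in $n$ variables equals $r(e_1,\dots,e_n)$ as functions on $Y^n$ for some polynomial $r$. *)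

theory Defs
  imports Main "HOL-Combinatorics.Permutations"
begin

text \<open>A (not necessarily nontrivial) unital commutative semiring is modelled by the
sort {comm_semiring_0, comm_monoid_mult}: we deliberately avoid comm_semiring_1,
which contains the axiom 0 \<noteq> 1 and would exclude the zero semiring.\<close>

definition upper_bound :: "'a::comm_monoid_add itself \<Rightarrow> bool" where
  "upper_bound _ \<longleftrightarrow>
     (\<forall>a b::'a. (\<exists>x. a + x = b) \<and> (\<exists>y. b + y = a) \<longrightarrow> a = b)"

datatype 'a sx = SX 'a 'a

instantiation sx :: ("{comm_semiring_0,comm_monoid_mult}") "{comm_semiring_0,comm_monoid_mult}"
begin

fun plus_sx :: "'a sx \<Rightarrow> 'a sx \<Rightarrow> 'a sx" where
  "plus_sx (SX a1 a2) (SX b1 b2) = SX (a1 + b1) (a2 + b2)"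

fun times_sx :: "'a sx \<Rightarrow> 'a sx \<Rightarrow> 'a sx" where
  "times_sx (SX a1 a2) (SX b1 b2) = SX (a1 * b1 + a2 * b2) (a1 * b2 + a2 * b1)"

definition zero_sx :: "'a sx" where "zero_sx = SX 0 0"

definition one_sx :: "'a sx" where "one_sx = SX 1 0"

instance
proof
  fix a b c :: "'a sx"
  show "a + b + c = a + (b + c)"
    by (cases a; cases b; cases c) (simp add: add.assoc)
  show "a + b = b + a"
    by (cases a; cases b) (simp add: add.commute)
  show "0 + a = a"
    by (cases a) (simp add: zero_sx_def)
  show "a * b * c = a * (b * c)"
    by (cases a; cases b; cases c) (simp add: algebra_simps)
  show "a * b = b * a"
    by (cases a; cases b) (simp add: algebra_simps)
  show "(a + b) * c = a * c + b * c"
    by (cases a; cases b; cases c) (simp add: algebra_simps)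
  show "0 * a = 0"
    by (cases a) (simp add: zero_sx_def)
  show "a * 0 = 0"
    by (cases a) (simp add: zero_sx_def)
  show "1 * a = a"
    by (cases a) (simp add: one_sx_def)
qed

end

definition frobenius :: "'b::{comm_semiring_0,comm_monoid_mult} itself \<Rightarrow> bool" where
  "frobenius _ \<longleftrightarrow> (\<forall>(x::'b) y (n::nat). n \<ge> 1 \<longrightarrow> (x + y) ^ n = x ^ n + y ^ n)"

text \<open>Formal polynomial expressions in n variables x_0,...,x_{n-1} over Y: a coefficient
function on exponent vectors d :: nat \<Rightarrow> nat (d j = exponent of x_j), with finite support
and exponent vectors supported in {..<n}.\<close>
definition is_poly :: "nat \<Rightarrow> ((nat \<Rightarrow> nat) \<Rightarrow> 'b::zero) \<Rightarrow> bool" where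
  "is_poly n c \<longleftrightarrow> finite {d. c d \<noteq> 0} \<and> (\<forall>d. c d \<noteq> 0 \<longrightarrow> (\<forall>j\<ge>n. d j = 0))"

definition poly_eval :: "nat \<Rightarrow> ((nat \<Rightarrow> nat) \<Rightarrow> 'b::{comm_semiring_0,comm_monoid_mult})
    \<Rightarrow> (nat \<Rightarrow> 'b) \<Rightarrow> 'b" where
  "poly_eval n c x = (\<Sum>d\<in>{d. c d \<noteq> 0}. c d * (\<Prod>j<n. x j ^ d j))"

definition symmetric_poly :: "nat \<Rightarrow> ((nat \<Rightarrow> nat) \<Rightarrow> 'b::zero) \<Rightarrow> bool" where
  "symmetric_poly n c \<longleftrightarrow> (\<forall>\<sigma>. \<sigma> permutes {..<n} \<longrightarrow> (\<forall>d. c (d \<circ> \<sigma>) = c d))"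

definition elem_sym :: "nat \<Rightarrow> nat \<Rightarrow> (nat \<Rightarrow> 'b::{comm_semiring_0,comm_monoid_mult}) \<Rightarrow> 'b" where
  "elem_sym n k x = (\<Sum>S\<in>{S. S \<subseteq> {..<n} \<and> card S = k}. \<Prod>i\<in>S. x i)"

definition fully_elementary :: "'b::{comm_semiring_0,comm_monoid_mult} itself \<Rightarrow> bool" where
  "fully_elementary _ \<longleftrightarrow>
     (\<forall>n (c :: (nat \<Rightarrow> nat) \<Rightarrow> 'b). is_poly n c \<and> symmetric_poly n c \<longrightarrow>
        (\<exists>r :: (nat \<Rightarrow> nat) \<Rightarrow> 'b. is_poly n r \<and>
           (\<forall>x. poly_eval n c x = poly_eval n r (\<lambda>j. elem_sym n (Suc j) x))))"

end

theory Submission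
  imports Defs
begin

fun s1 :: "'a sx \<Rightarrow> 'a" where "s1 (SX a b) = a"
fun s2 :: "'a sx \<Rightarrow> 'a" where "s2 (SX a b) = b"

lemma ub_zero:
  assumes "upper_bound (X::'a::{comm_semiring_0,comm_monoid_mult} itself)" "(a::'a) + b = 0"
  shows "a = 0"
  using assms unfolding upper_bound_def by (metis add_0)

lemma ub_sum_zero:
  assumes "upper_bound (X::'a::{comm_semiring_0,comm_monoid_mult} itself)" "finite S"
    "sum (f::_ \<Rightarrow> 'a) S = 0" "x \<in> S"
  shows "f x = 0"
  using assms(2,3,4)
proof (induction S rule: finite_induct)
  case (insert y F)
  then have "f y + sum f F = 0" by simp
  then have "f y = 0" "sum f F = 0" using ub_zero[OF assms(1)] by (metis add.commute)+
  then show ?case using insert by auto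
qed simp

lemma sum_sx:
  fixes f :: "_ \<Rightarrow> 'a::{comm_semiring_0,comm_monoid_mult} sx"
  shows "finite S \<Longrightarrow> sum f S = SX (sum (s1 \<circ> f) S) (sum (s2 \<circ> f) S)"
proof (induction S rule: finite_induct)
  case empty then show ?case by (simp add: zero_sx_def)
next
  case (insert y F)
  then show ?case by (cases "f y") simp
qed

lemma t_pow:
  fixes z :: "'a::{comm_semiring_0,comm_monoid_mult} sx"
  shows "\<exists>u. z * SX 1 1 ^ Suc k = SX u u"
proof (induction k arbitrary: z)
  case 0 then show ?case by (cases z) auto
next
  case (Suc k)
  have "z * SX 1 1 ^ Suc (Suc k) = (z * SX 1 1) * SX 1 1 ^ Suc k"
    by (simp only: power_Suc mult.assoc)
  then show ?case using Suc by metis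
qed

lemma e_pow:
  fixes u :: "'a::{comm_semiring_0,comm_monoid_mult}"
  shows "SX u u * SX 0 1 ^ k = SX u u"
proof (induction k)
  case 0 then show ?case by (simp add: one_sx_def)
next
  case (Suc k)
  have "SX u u * SX 0 1 ^ Suc k = (SX u u * SX 0 1) * SX 0 1 ^ k"
    by (simp only: power_Suc mult.assoc mult.commute[of "SX 0 1"])
  then show ?case using Suc by simp
qed

lemma es1: "elem_sym 2 1 x = x 0 + x 1"
proof -
  have "{S. S \<subseteq> {..<2::nat} \<and> card S = 1} = {{0},{1}}"
    by (auto simp: card_1_singleton_iff)
  then show ?thesis unfolding elem_sym_def by simp
qed

lemma es2: "elem_sym 2 2 x = x 0 * x 1"
proof -
  have "{S. S \<subseteq> {..<2::nat} \<and> card S = 2} = {{0,1}}"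
  proof (rule set_eqI, rule iffI)
    fix S :: "nat set" assume "S \<in> {S. S \<subseteq> {..<2} \<and> card S = 2}"
    then have "S = {..<2}" by (intro card_seteq) auto
    then show "S \<in> {{0,1}}" by (auto simp: numeral_2_eq_2 lessThan_Suc)
  qed auto
  then show ?thesis unfolding elem_sym_def by simp
qed

lemma pe2: "finite {d. r d \<noteq> 0} \<Longrightarrow>
  poly_eval 2 r y = (\<Sum>d\<in>{d. r d \<noteq> 0}. r d * (y 0 ^ d 0 * y 1 ^ d 1))"
  unfolding poly_eval_def by (simp add: numeral_2_eq_2 lessThan_Suc ac_simps)


definition D0 :: "nat \<Rightarrow> nat" where "D0 = (\<lambda>j. if j = 0 then 2 else 0)"
definition D1 :: "nat \<Rightarrow> nat" where "D1 = (\<lambda>j. if j = 1 then 2 else 0)"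

definition cc :: "(nat \<Rightarrow> nat) \<Rightarrow> 'b::{comm_semiring_0,comm_monoid_mult}" where
  "cc d = (if (\<forall>j\<ge>2. d j = 0) \<and> d 0 + d 1 = 2 \<and> d 0 * d 1 = 0 then 1 else 0)"

lemma cc_cond: "((\<forall>j\<ge>2. d j = 0) \<and> d 0 + d 1 = 2 \<and> d 0 * d 1 = 0) \<longleftrightarrow> d = D0 \<or> d = D1"
proof
  assume H: "(\<forall>j\<ge>2. d j = 0) \<and> d 0 + d 1 = 2 \<and> d 0 * d 1 = 0"
  then have "(d 0 = 2 \<and> d 1 = 0) \<or> (d 0 = 0 \<and> d 1 = 2)" by auto
  then show "d = D0 \<or> d = D1"
  proof
    assume "d 0 = 2 \<and> d 1 = 0"
    then have "d = D0" using H unfolding D0_def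
      by (intro ext) (metis One_nat_def Suc_1 less_2_cases not_less)
    then show ?thesis ..
  next
    assume "d 0 = 0 \<and> d 1 = 2"
    then have "d = D1" using H unfolding D1_def
      by (intro ext) (metis One_nat_def Suc_1 less_2_cases not_less)
    then show ?thesis ..
  qed
qed (auto simp: D0_def D1_def)

lemma D01: "D0 \<noteq> D1"
proof
  assume "D0 = D1" then have "D0 0 = D1 0" by simp
  then show False by (simp add: D0_def D1_def)
qed

lemma cc_supp:
  assumes "(1::'b::{comm_semiring_0,comm_monoid_mult}) \<noteq> 0"
  shows "{d. (cc d :: 'b) \<noteq> 0} = {D0, D1}"
  using assms cc_cond unfolding cc_def by auto

lemma cc_poly: "is_poly 2 (cc :: _ \<Rightarrow> 'b::{comm_semiring_0,comm_monoid_mult})"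
proof -
  have "{d. (cc d :: 'b) \<noteq> 0} \<subseteq> {D0, D1}" using cc_cond unfolding cc_def by auto
  then have "finite {d. (cc d :: 'b) \<noteq> 0}" by (rule finite_subset) simp
  then show ?thesis unfolding is_poly_def by (simp add: cc_def)
qed

lemma perm2:
  assumes "\<sigma> permutes {..<2::nat}"
  shows "(\<sigma> 0 = 0 \<and> \<sigma> 1 = 1 \<or> \<sigma> 0 = 1 \<and> \<sigma> 1 = 0) \<and> (\<forall>j\<ge>2. \<sigma> j = j)"
proof -
  have a: "\<sigma> 0 < 2" "\<sigma> 1 < 2" using permutes_in_image[OF assms] by auto
  have "\<sigma> 0 \<noteq> \<sigma> 1" using permutes_inj[OF assms] by (metis inj_eq zero_neq_one)
  moreover have "\<forall>j\<ge>2. \<sigma> j = j" using permutes_not_in[OF assms] by auto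
  ultimately show ?thesis using a by auto
qed

lemma cc_sym: "symmetric_poly 2 (cc :: _ \<Rightarrow> 'b::{comm_semiring_0,comm_monoid_mult})"
  unfolding symmetric_poly_def
proof (intro allI impI)
  fix \<sigma> :: "nat \<Rightarrow> nat" and d :: "nat \<Rightarrow> nat"
  assume "\<sigma> permutes {..<2}"
  from perm2[OF this] have P: "\<sigma> 0 = 0 \<and> \<sigma> 1 = 1 \<or> \<sigma> 0 = 1 \<and> \<sigma> 1 = 0" "\<forall>j\<ge>2. \<sigma> j = j" by auto
  have "((\<forall>j\<ge>2. (d \<circ> \<sigma>) j = 0) \<and> (d \<circ> \<sigma>) 0 + (d \<circ> \<sigma>) 1 = 2 \<and> (d \<circ> \<sigma>) 0 * (d \<circ> \<sigma>) 1 = 0)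
     \<longleftrightarrow> ((\<forall>j\<ge>2. d j = 0) \<and> d 0 + d 1 = 2 \<and> d 0 * d 1 = 0)"
    using P by (auto simp: add.commute mult.commute)
  then show "(cc (d \<circ> \<sigma>) :: 'b) = cc d" unfolding cc_def by presburger
qed

lemma cc_eval:
  assumes "(1::'b::{comm_semiring_0,comm_monoid_mult}) \<noteq> 0"
  shows "poly_eval 2 (cc :: _ \<Rightarrow> 'b) x = x 0 ^ 2 + x 1 ^ 2"
proof -
  have "poly_eval 2 (cc :: _ \<Rightarrow> 'b) x = (\<Sum>d\<in>{D0,D1}. cc d * (x 0 ^ d 0 * x 1 ^ d 1))"
    using pe2[of cc x] cc_supp[OF assms] by simp
  also have "\<dots> = x 0 ^ 2 + x 1 ^ 2" using D01 cc_cond[of D0] cc_cond[of D1]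
    unfolding cc_def by (simp add: D0_def D1_def)
  finally show ?thesis .
qed


lemma fe_triv:
  fixes X :: "'a::{comm_semiring_0,comm_monoid_mult} itself"
  assumes ub: "upper_bound X" and fe: "fully_elementary TYPE('a sx)"
  shows "(1::'a) = 0"
proof (rule ccontr)
  assume n1: "(1::'a) \<noteq> 0"
  have n1s: "(1::'a sx) \<noteq> 0" using n1 by (simp add: one_sx_def zero_sx_def)
  obtain r :: "(nat \<Rightarrow> nat) \<Rightarrow> 'a sx" where rp: "is_poly 2 r"
    and req: "\<forall>x. poly_eval 2 cc x = poly_eval 2 r (\<lambda>j. elem_sym 2 (Suc j) x)"
    using fe cc_poly cc_sym unfolding fully_elementary_def by blast
  define S where "S = {d. r d \<noteq> 0}"
  have fin: "finite S" using rp unfolding is_poly_def S_def by simp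
  have ev: "x 0 ^ 2 + x 1 ^ 2 = (\<Sum>d\<in>S. r d * ((x 0 + x 1) ^ d 0 * (x 0 * x 1) ^ d 1))"
    for x :: "nat \<Rightarrow> 'a sx"
  proof -
    have a: "(\<lambda>j. elem_sym 2 (Suc j) x) 0 = x 0 + x 1" using es1[of x] by simp
    have b: "(\<lambda>j. elem_sym 2 (Suc j) x) 1 = x 0 * x 1" using es2[of x] by (simp add: numeral_2_eq_2)
    show ?thesis using req cc_eval[OF n1s, of x] pe2[OF fin[unfolded S_def], of "\<lambda>j. elem_sym 2 (Suc j) x"]
      a b unfolding S_def by simp
  qed
  define t where "t = SX (1::'a) 1"
  define e where "e = SX (0::'a) 1"
  have P: "SX (1+1) 0 = (\<Sum>d\<in>S. r d * (t ^ d 0 * e ^ d 1))"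
  proof -
    have "(1::'a sx) ^ 2 + e ^ 2 = SX (1+1) 0" by (simp add: e_def one_sx_def power2_eq_square)
    moreover have "(1::'a sx) + e = t" "(1::'a sx) * e = e"
      by (simp_all add: t_def e_def one_sx_def)
    ultimately show ?thesis using ev[of "\<lambda>j. if j = 0 then 1 else e"] by simp
  qed
  have s2z: "(\<Sum>d\<in>S. s2 (r d * (t ^ d 0 * e ^ d 1))) = 0"
    using arg_cong[OF P, of s2] sum_sx[OF fin, of "\<lambda>d. r d * (t ^ d 0 * e ^ d 1)"]
    by (simp add: o_def)
  have key: "r d * t ^ d 0 = 0" if "0 < d 0" for d
  proof (cases "d \<in> S")
    case False then show ?thesis by (simp add: S_def)
  next
    case True
    obtain k where k: "d 0 = Suc k" using \<open>0 < d 0\<close> gr0_implies_Suc by blast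
    obtain u where u: "r d * t ^ d 0 = SX u u" using t_pow[of "r d" k] k t_def by auto
    have "r d * (t ^ d 0 * e ^ d 1) = SX u u"
      using u e_pow[of u "d 1"] by (simp add: e_def mult.assoc[symmetric])
    then have "u = 0" using ub_sum_zero[OF ub fin s2z True] by simp
    then show ?thesis using u by (simp add: zero_sx_def)
  qed
  have "t ^ 2 + 0 ^ 2 = (\<Sum>d\<in>S. r d * (t ^ d 0 * 0 ^ d 1))"
    using ev[of "\<lambda>j. if j = 0 then t else 0"] by simp
  also have "\<dots> = (\<Sum>d\<in>S. r d * (0 ^ d 0 * 0 ^ d 1))"
  proof (rule sum.cong)
    fix d assume "d \<in> S"
    show "r d * (t ^ d 0 * 0 ^ d 1) = r d * (0 ^ d 0 * 0 ^ d 1)"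
    proof (cases "d 0 = 0")
      case False
      then have "r d * (t ^ d 0 * 0 ^ d 1) = (r d * t ^ d 0) * 0 ^ d 1" by (simp add: mult.assoc)
      also have "\<dots> = 0" using key False by simp
      finally show ?thesis using False by (cases "d 0") simp_all
    qed simp
  qed simp
  also have "\<dots> = 0 ^ 2 + 0 ^ 2"
    using ev[of "\<lambda>j. 0"] by simp
  finally have "t ^ 2 = 0" by (simp add: power2_eq_square)
  then have "(1::'a) + 1 = 0" by (simp add: t_def power2_eq_square zero_sx_def)
  then show False using ub_zero[OF ub] n1 by blast
qed

lemma frob_triv:
  fixes X :: "'a::{comm_semiring_0,comm_monoid_mult} itself"
  assumes ub: "upper_bound X" and fr: "frobenius TYPE('a sx)"
  shows "(1::'a) = 0"
proof -
  have "((1::'a sx) + SX 0 1) ^ 2 = 1 ^ 2 + SX 0 1 ^ 2"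
    using fr unfolding frobenius_def by auto
  then have "(1::'a) + 1 = 0" by (simp add: one_sx_def power2_eq_square)
  then show ?thesis using ub_zero[OF ub] by blast
qed

lemma triv_all:
  assumes "(1::'a::{comm_semiring_0,comm_monoid_mult}) = 0"
  shows "(z::'a sx) = w"
proof -
  have "\<And>x::'a. x = 0" using assms by (metis mult_1_right mult_zero_right)
  then have "\<And>a b. SX a b = (SX 0 0 :: 'a sx)" by metis
  then show ?thesis by (metis sx.exhaust)
qed

theorem proposition6p1:
  fixes X :: "'a::{comm_semiring_0,comm_monoid_mult} itself"
  assumes "upper_bound X"
  shows "(fully_elementary TYPE('a sx) \<longleftrightarrow> frobenius TYPE('a sx))
       \<and> (frobenius TYPE('a sx) \<longleftrightarrow> (\<forall>x::'a. x = 0))"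
proof -
  have A: "(\<forall>x::'a. x = 0) \<longleftrightarrow> (1::'a) = 0" by (metis mult_1_right mult_zero_right)
  have B: "(1::'a) = 0 \<Longrightarrow> frobenius TYPE('a sx)"
    unfolding frobenius_def using triv_all by blast
  have C: "(1::'a) = 0 \<Longrightarrow> fully_elementary TYPE('a sx)"
    unfolding fully_elementary_def
  proof (intro allI impI)
    fix n and c :: "(nat \<Rightarrow> nat) \<Rightarrow> 'a sx"
    assume "(1::'a) = 0"
    then show "\<exists>r :: (nat \<Rightarrow> nat) \<Rightarrow> 'a sx. is_poly n r \<and>
           (\<forall>x. poly_eval n c x = poly_eval n r (\<lambda>j. elem_sym n (Suc j) x))"
      by (intro exI[of _ "\<lambda>_. 0"]) (simp add: is_poly_def triv_all)
  qed
  show ?thesis using A B C fe_triv[OF assms] frob_triv[OF assms] by blast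
qed

end
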